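(* There exists a constant $C>0$, depending only on $d$, $C_{\rm L}$, $\rho$ and $f$ (not on $m$ or $\theta$), such that for every $m\ge1$, every parameter $\theta=(a_k,w_k)_{k=1}^m$ with $q_{\max}(\theta)\le1$, and every $k\in[m]$, $$|f_k(\theta)|\le C\big(q_{\max}(\theta)^3+m\,q_{\max}(\theta)^5\big),\qquad \|g_k(\theta)\|_2\le C\big(q_{\max}(\theta)^3+m\,q_{\max}(\theta)^5\big).$$
   Context: Fix $d\ge1$. For $\theta=(a_k,w_k)_{k=1}^m$, $a_k\in\mathbb R$, $w_k=(w_k^1,\dots,w_k^d)^T\in\mathbb R^d$, let $f_\theta(x)=\sum_{k=1}^m a_k\sigma(w_k^Tx)$ and $R(\theta)=\tfrac12\int_{\mathbb R^d}(f_\theta(x)-f(x))^2\rho(x)dx$, where $\rho$ is a compactly supported probability density on $\mathbb R^d$ with $\int x_i^2\rho=1$ and $\int x_ix_j\rho=0$ for $i\ne j$; $f$ is bounded on $\mathrm{supp}\,\rho$ with $\int f(x)x\rho(x)dx=e_1=(1,0,\dots,0)^T$; $\sigma$ is three times differentiable with $\sigma(0)=0$, $\sigma'(0)=1$, $\sigma''(0)=0$, $|\sigma'''(z)|\le C_{\rm L}$ for all $z$. Set $q_{\max}(\theta)=\max_{k\in[m],i\in[d]}\{|a_k|,|w_k^i|\}$ and define the higher-order terms $$f_k(\theta)=-\frac{\partial R}{\partial a_k}(\theta)-\Big(w_k^1-\sum_{i=1}^d\Big(\sum_{l=1}^m a_lw_l^i\Big)w_k^i\Big),\qquad g_k(\theta)=-\nabla_{w_k}R(\theta)-a_k\Big(e_1-\sum_{l=1}^m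 a_lw_l\Big)\in\mathbb R^d.$$ *)

theory Defs
  imports "HOL-Analysis.Analysis"
begin

definition fnet :: "(real \<Rightarrow> real) \<Rightarrow> nat \<Rightarrow> (nat \<Rightarrow> real) \<Rightarrow> (nat \<Rightarrow> real^'n) \<Rightarrow> real^'n \<Rightarrow> real" where
  "fnet \<sigma> m a w x = (\<Sum>l<m. a l * \<sigma> (w l \<bullet> x))"

definition risk :: "(real \<Rightarrow> real) \<Rightarrow> (real^'n \<Rightarrow> real) \<Rightarrow> (real^'n \<Rightarrow> real) \<Rightarrow> nat \<Rightarrow> (nat \<Rightarrow> real) \<Rightarrow> (nat \<Rightarrow> real^'n) \<Rightarrow> real" where
  "risk \<sigma> \<rho> f m a w = 1/2 * integral\<^sup>L lborel (\<lambda>x. (fnet \<sigma> m a w x - f x)\<^sup>2 * \<rho> x)"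

definition qmax :: "nat \<Rightarrow> (nat \<Rightarrow> real) \<Rightarrow> (nat \<Rightarrow> real^'n) \<Rightarrow> real" where
  "qmax m a w = Max (\<Union>k\<in>{..<m}. insert \<bar>a k\<bar> (range (\<lambda>i. \<bar>w k $ i\<bar>)))"

definition dR_a :: "(real \<Rightarrow> real) \<Rightarrow> (real^'n \<Rightarrow> real) \<Rightarrow> (real^'n \<Rightarrow> real) \<Rightarrow> nat \<Rightarrow> (nat \<Rightarrow> real) \<Rightarrow> (nat \<Rightarrow> real^'n) \<Rightarrow> nat \<Rightarrow> real" where
  "dR_a \<sigma> \<rho> f m a w k = deriv (\<lambda>t. risk \<sigma> \<rho> f m (a(k := a k + t)) w) 0"

definition dR_w :: "(real \<Rightarrow> real) \<Rightarrow> (real^'n \<Rightarrow> real) \<Rightarrow> (real^'n \<Rightarrow> real) \<Rightarrow> nat \<Rightarrow> (nat \<Rightarrow> real) \<Rightarrow> (nat \<Rightarrow> real^'n) \<Rightarrow> nat \<Rightarrow> real^'n" where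
  "dR_w \<sigma> \<rho> f m a w k = (\<chi> i. deriv (\<lambda>t. risk \<sigma> \<rho> f m a (w(k := w k + t *\<^sub>R axis i 1))) 0)"

text \<open>Higher-order terms; j1 is the distinguished coordinate playing the role of index 1 (e_1 = axis j1 1).\<close>
definition hot_f :: "(real \<Rightarrow> real) \<Rightarrow> (real^'n \<Rightarrow> real) \<Rightarrow> (real^'n \<Rightarrow> real) \<Rightarrow> 'n \<Rightarrow> nat \<Rightarrow> (nat \<Rightarrow> real) \<Rightarrow> (nat \<Rightarrow> real^'n) \<Rightarrow> nat \<Rightarrow> real" where
  "hot_f \<sigma> \<rho> f j1 m a w k = - dR_a \<sigma> \<rho> f m a w k
     - (w k $ j1 - (\<Sum>i\<in>UNIV. (\<Sum>l<m. a l * w l $ i) * w k $ i))"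

definition hot_g :: "(real \<Rightarrow> real) \<Rightarrow> (real^'n \<Rightarrow> real) \<Rightarrow> (real^'n \<Rightarrow> real) \<Rightarrow> 'n \<Rightarrow> nat \<Rightarrow> (nat \<Rightarrow> real) \<Rightarrow> (nat \<Rightarrow> real^'n) \<Rightarrow> nat \<Rightarrow> real^'n" where
  "hot_g \<sigma> \<rho> f j1 m a w k = - dR_w \<sigma> \<rho> f m a w k
     - a k *\<^sub>R (axis j1 1 - (\<Sum>l<m. a l *\<^sub>R w l))"

end

theory Submission
  imports Defs
begin


lemma mvt_bound:
  fixes g g' :: "real \<Rightarrow> real"
  assumes d: "\<And>z. (g has_real_derivative g' z) (at z)"
    and b: "\<And>z. min a b \<le> z \<Longrightarrow> z \<le> max a b \<Longrightarrow> \<bar>g' z\<bar> \<le> M"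
  shows "\<bar>g b - g a\<bar> \<le> M * \<bar>b - a\<bar>"
proof -
  consider "a = b" | "a < b" | "b < a" by linarith
  then show ?thesis
  proof cases
    case 1 then show ?thesis using b[of a] by auto
  next
    case 2
    from MVT2[OF 2, of g g'] d obtain z where z: "a < z" "z < b" "g b - g a = (b - a) * g' z" by blast
    have "\<bar>g' z\<bar> \<le> M" using b[of z] z 2 by auto
    then have "\<bar>b - a\<bar> * \<bar>g' z\<bar> \<le> \<bar>b - a\<bar> * M" by (rule mult_left_mono) simp
    moreover have "\<bar>g b - g a\<bar> = \<bar>b - a\<bar> * \<bar>g' z\<bar>" using z(3) by (simp only: abs_mult)
    ultimately show ?thesis by (simp only: mult.commute)
  next
    case 3
    from MVT2[OF 3, of g g'] d obtain z where z: "b < z" "z < a" "g a - g b = (a - b) * g' z" by blast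
    have "\<bar>g' z\<bar> \<le> M" using b[of z] z 3 by auto
    then have "\<bar>a - b\<bar> * \<bar>g' z\<bar> \<le> \<bar>a - b\<bar> * M" by (rule mult_left_mono) simp
    moreover have "\<bar>g a - g b\<bar> = \<bar>a - b\<bar> * \<bar>g' z\<bar>" using z(3) by (simp only: abs_mult)
    ultimately show ?thesis by (simp only: mult.commute abs_minus_commute)
  qed
qed

locale sig =
  fixes \<sigma> \<sigma>1 \<sigma>2 \<sigma>3 :: "real \<Rightarrow> real" and CL :: real
  assumes s1: "\<And>z. (\<sigma> has_real_derivative \<sigma>1 z) (at z)"
    and s2: "\<And>z. (\<sigma>1 has_real_derivative \<sigma>2 z) (at z)"
    and s3: "\<And>z. (\<sigma>2 has_real_derivative \<sigma>3 z) (at z)"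
    and s0: "\<sigma> 0 = 0" "\<sigma>1 0 = 1" "\<sigma>2 0 = 0"
    and sL: "\<And>z. \<bar>\<sigma>3 z\<bar> \<le> CL"
begin

lemma CL_nonneg: "CL \<ge> 0" using sL[of 0] by linarith

lemma L1: "\<bar>\<sigma>2 z\<bar> \<le> CL * \<bar>z\<bar>"
  using mvt_bound[of \<sigma>2 \<sigma>3 0 z CL, OF s3 sL] s0 by simp

lemma L2: "\<bar>\<sigma>1 z - \<sigma>1 y\<bar> \<le> CL * max \<bar>z\<bar> \<bar>y\<bar> * \<bar>z - y\<bar>"
proof (rule mvt_bound[of \<sigma>1 \<sigma>2, OF s2])
  fix t assume "min y z \<le> t" "t \<le> max y z"
  then have "\<bar>t\<bar> \<le> max \<bar>z\<bar> \<bar>y\<bar>" by auto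
  then show "\<bar>\<sigma>2 t\<bar> \<le> CL * max \<bar>z\<bar> \<bar>y\<bar>"
    using L1[of t] CL_nonneg by (meson mult_left_mono order_trans)
qed

lemma L2': "\<bar>\<sigma>1 z - 1\<bar> \<le> CL * z\<^sup>2"
proof -
  have e: "CL * max \<bar>z\<bar> \<bar>0\<bar> * \<bar>z - 0\<bar> = CL * z\<^sup>2"
    by (simp add: power2_eq_square abs_mult_self_eq mult.assoc)
  show ?thesis using L2[of z 0] s0(2) unfolding e by simp
qed

lemma L3: "\<bar>\<sigma> z - z\<bar> \<le> CL * \<bar>z\<bar>^3"
proof -
  have d: "\<And>t. ((\<lambda>t. \<sigma> t - t) has_real_derivative \<sigma>1 t - 1) (at t)"
    by (auto intro!: derivative_eq_intros s1)
  have A: "\<bar>(\<sigma> z - z) - (\<sigma> 0 - 0)\<bar> \<le> (CL * z\<^sup>2) * \<bar>z - 0\<bar>"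
  proof (rule mvt_bound[OF d])
    fix t assume "min 0 z \<le> t" "t \<le> max 0 z"
    then have "\<bar>t\<bar> \<le> \<bar>z\<bar>" by (cases "z \<ge> 0") (auto simp: min_def max_def)
    then have "t\<^sup>2 \<le> z\<^sup>2" by (metis abs_le_square_iff)
    then show "\<bar>\<sigma>1 t - 1\<bar> \<le> CL * z\<^sup>2"
      using L2'[of t] CL_nonneg by (meson mult_left_mono order_trans)
  qed
  have e1: "(\<sigma> z - z) - (\<sigma> 0 - 0) = \<sigma> z - z" by (simp only: s0(1) diff_zero)
  have e2: "(CL * z\<^sup>2) * \<bar>z - 0\<bar> = CL * \<bar>z\<bar>^3"
  proof -
    have "\<bar>z\<bar>\<^sup>2 * \<bar>z\<bar> = \<bar>z\<bar>^3" by (simp only: power2_eq_square power3_eq_cube)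
    then have "z\<^sup>2 * \<bar>z\<bar> = \<bar>z\<bar>^3" by simp
    then show ?thesis by (simp add: mult.assoc)
  qed
  show ?thesis using A unfolding e1 e2 .
qed

lemma L4: "\<bar>\<sigma> (u + h) - \<sigma> u - h * \<sigma>1 u\<bar> \<le> CL * (\<bar>u\<bar> + \<bar>h\<bar>) * h\<^sup>2"
proof -
  have d: "\<And>t. ((\<lambda>t. \<sigma> (u + t) - t * \<sigma>1 u) has_real_derivative \<sigma>1 (u + t) - \<sigma>1 u) (at t)"
  proof -
    fix t
    have "((\<lambda>t. \<sigma> (u + t)) has_real_derivative \<sigma>1 (u + t) * (0 + 1)) (at t)"
      by (rule DERIV_chain2[OF s1]) (auto intro!: derivative_eq_intros)
    then have "((\<lambda>t. \<sigma> (u + t) - t * \<sigma>1 u) has_real_derivative \<sigma>1 (u + t) * (0 + 1) - 1 * \<sigma>1 u) (at t)"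
      by (intro DERIV_diff DERIV_cmult_right DERIV_ident)
    then show "((\<lambda>t. \<sigma> (u + t) - t * \<sigma>1 u) has_real_derivative \<sigma>1 (u + t) - \<sigma>1 u) (at t)"
      by simp
  qed
  have A: "\<bar>(\<sigma> (u + h) - h * \<sigma>1 u) - (\<sigma> (u + 0) - 0 * \<sigma>1 u)\<bar> \<le> (CL * (\<bar>u\<bar> + \<bar>h\<bar>) * \<bar>h\<bar>) * \<bar>h - 0\<bar>"
  proof (rule mvt_bound[OF d])
    fix t assume "min 0 h \<le> t" "t \<le> max 0 h"
    then have t: "\<bar>t\<bar> \<le> \<bar>h\<bar>" by auto
    have "\<bar>\<sigma>1 (u + t) - \<sigma>1 u\<bar> \<le> CL * max \<bar>u + t\<bar> \<bar>u\<bar> * \<bar>u + t - u\<bar>" by (rule L2)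
    also have "\<dots> \<le> CL * (\<bar>u\<bar> + \<bar>h\<bar>) * \<bar>h\<bar>"
    proof (rule mult_mono)
      have "max \<bar>u + t\<bar> \<bar>u\<bar> \<le> \<bar>u\<bar> + \<bar>h\<bar>" using t abs_triangle_ineq[of u t] by (simp add: max_def)
      then show "CL * max \<bar>u + t\<bar> \<bar>u\<bar> \<le> CL * (\<bar>u\<bar> + \<bar>h\<bar>)" using CL_nonneg by (rule mult_left_mono)
      show "\<bar>u + t - u\<bar> \<le> \<bar>h\<bar>" using t by simp
      show "0 \<le> CL * (\<bar>u\<bar> + \<bar>h\<bar>)" using CL_nonneg by simp
    qed simp
    finally show "\<bar>\<sigma>1 (u + t) - \<sigma>1 u\<bar> \<le> CL * (\<bar>u\<bar> + \<bar>h\<bar>) * \<bar>h\<bar>" .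
  qed
  have e1: "(\<sigma> (u + h) - h * \<sigma>1 u) - (\<sigma> (u + 0) - 0 * \<sigma>1 u) = \<sigma> (u + h) - \<sigma> u - h * \<sigma>1 u" by simp
  have e2: "(CL * (\<bar>u\<bar> + \<bar>h\<bar>) * \<bar>h\<bar>) * \<bar>h - 0\<bar> = CL * (\<bar>u\<bar> + \<bar>h\<bar>) * h\<^sup>2"
    by (simp add: power2_eq_square abs_mult_self_eq mult.assoc)
  show ?thesis using A unfolding e1 e2 .
qed

lemma L5: "\<bar>\<sigma> (u + h) - \<sigma> u\<bar> \<le> (1 + CL * (\<bar>u\<bar> + \<bar>h\<bar>)\<^sup>2) * \<bar>h\<bar>"
proof -
  have d: "\<And>t. ((\<lambda>t. \<sigma> (u + t)) has_real_derivative \<sigma>1 (u + t)) (at t)"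
  proof -
    fix t
    have "((\<lambda>t. \<sigma> (u + t)) has_real_derivative \<sigma>1 (u + t) * (0 + 1)) (at t)"
      by (rule DERIV_chain2[OF s1]) (auto intro!: derivative_eq_intros)
    then show "((\<lambda>t. \<sigma> (u + t)) has_real_derivative \<sigma>1 (u + t)) (at t)" by simp
  qed
  have "\<bar>\<sigma> (u + h) - \<sigma> (u + 0)\<bar> \<le> (1 + CL * (\<bar>u\<bar> + \<bar>h\<bar>)\<^sup>2) * \<bar>h - 0\<bar>"
  proof (rule mvt_bound[OF d])
    fix t assume "min 0 h \<le> t" "t \<le> max 0 h"
    then have t: "\<bar>u + t\<bar> \<le> \<bar>u\<bar> + \<bar>h\<bar>" by auto
    then have "(u + t)\<^sup>2 \<le> (\<bar>u\<bar> + \<bar>h\<bar>)\<^sup>2" by (simp add: abs_le_square_iff[symmetric])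
    then have "CL * (u + t)\<^sup>2 \<le> CL * (\<bar>u\<bar> + \<bar>h\<bar>)\<^sup>2" using CL_nonneg by (rule mult_left_mono)
    then show "\<bar>\<sigma>1 (u + t)\<bar> \<le> 1 + CL * (\<bar>u\<bar> + \<bar>h\<bar>)\<^sup>2" using L2'[of "u+t"] by linarith
  qed
  then show ?thesis by (simp only: add_0_right diff_zero)
qed

end


lemma deriv_lemma:
  fixes F :: "real \<Rightarrow> real^'n \<Rightarrow> real" and D \<rho> :: "real^'n \<Rightarrow> real"
  assumes iF: "\<And>t. \<bar>t\<bar> \<le> 1 \<Longrightarrow> integrable lborel (F t)"
    and iD: "integrable lborel D" and ir: "integrable lborel \<rho>"
    and b: "\<And>t x. \<bar>t\<bar> \<le> 1 \<Longrightarrow> \<bar>F t x - F 0 x - t * D x\<bar> \<le> K * t\<^sup>2 * \<rho> x"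
  shows "deriv (\<lambda>t. integral\<^sup>L lborel (F t)) 0 = integral\<^sup>L lborel D"
proof -
  define h where "h t = integral\<^sup>L lborel (F t)" for t
  define I where "I = integral\<^sup>L lborel \<rho>"
  have est: "\<bar>h t - h 0 - t * integral\<^sup>L lborel D\<bar> \<le> K * t\<^sup>2 * I" if t: "\<bar>t\<bar> \<le> 1" for t
  proof -
    have i0: "integrable lborel (F 0)" using iF[of 0] by simp
    have "h t - h 0 - t * integral\<^sup>L lborel D = integral\<^sup>L lborel (\<lambda>x. F t x - F 0 x - t * D x)"
    proof -
      have "integral\<^sup>L lborel (\<lambda>x. F t x - F 0 x - t * D x) = integral\<^sup>L lborel (\<lambda>x. F t x - F 0 x) - integral\<^sup>L lborel (\<lambda>x. t * D x)"
        using iF[OF t] i0 iD by (simp add: integrable_mult_right)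
      also have "integral\<^sup>L lborel (\<lambda>x. F t x - F 0 x) = h t - h 0"
        unfolding h_def using iF[OF t] i0 by simp
      also have "integral\<^sup>L lborel (\<lambda>x. t * D x) = t * integral\<^sup>L lborel D" by simp
      finally show ?thesis by simp
    qed
    also have "\<bar>\<dots>\<bar> \<le> integral\<^sup>L lborel (\<lambda>x. K * t\<^sup>2 * \<rho> x)"
    proof (rule integral_abs_bound_integral)
      show "integrable lborel (\<lambda>x. F t x - F 0 x - t * D x)"
        using iF[OF t] i0 iD by (auto intro!: integrable_diff integrable_mult_right)
      show "integrable lborel (\<lambda>x. K * t\<^sup>2 * \<rho> x)" using ir by auto
      show "\<And>x. \<bar>F t x - F 0 x - t * D x\<bar> \<le> K * t\<^sup>2 * \<rho> x" using b[OF t] by blast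
    qed
    also have "\<dots> = K * t\<^sup>2 * I" unfolding I_def by simp
    finally show ?thesis .
  qed
  have "(h has_real_derivative integral\<^sup>L lborel D) (at 0)"
    unfolding has_field_derivative_iff
  proof (rule LIM_zero_cancel, rule Lim_null_comparison)
    show "\<forall>\<^sub>F y in at 0. norm ((h y - h 0) / (y - 0) - integral\<^sup>L lborel D) \<le> \<bar>K * I\<bar> * \<bar>y\<bar>"
      unfolding eventually_at
    proof (intro exI[of _ 1] conjI ballI impI)
      fix y :: real assume y: "y \<noteq> 0 \<and> dist y 0 < 1"
      then have y1: "\<bar>y\<bar> \<le> 1" by simp
      have "(h y - h 0) / (y - 0) - integral\<^sup>L lborel D = (h y - h 0 - y * integral\<^sup>L lborel D) / y"
        using y by (simp add: field_simps)
      then have "norm ((h y - h 0) / (y - 0) - integral\<^sup>L lborel D) = \<bar>h y - h 0 - y * integral\<^sup>L lborel D\<bar> / \<bar>y\<bar>"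
        by simp
      also have "\<dots> \<le> (\<bar>K * I\<bar> * (\<bar>y\<bar> * \<bar>y\<bar>)) / \<bar>y\<bar>"
      proof (rule divide_right_mono)
        have "K * y\<^sup>2 * I = (K * I) * (\<bar>y\<bar> * \<bar>y\<bar>)" by (simp add: power2_eq_square mult_ac)
        also have "\<dots> \<le> \<bar>K * I\<bar> * (\<bar>y\<bar> * \<bar>y\<bar>)" by (rule mult_right_mono) auto
        finally show "\<bar>h y - h 0 - y * integral\<^sup>L lborel D\<bar> \<le> \<bar>K * I\<bar> * (\<bar>y\<bar> * \<bar>y\<bar>)"
          using est[OF y1] by linarith
      qed simp
      also have "\<dots> = \<bar>K * I\<bar> * \<bar>y\<bar>"
        using y by (simp del: abs_mult_self_eq)
      finally show "norm ((h y - h 0) / (y - 0) - integral\<^sup>L lborel D) \<le> \<bar>K * I\<bar> * \<bar>y\<bar>" .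
    qed simp
    show "((\<lambda>y. \<bar>K * I\<bar> * \<bar>y\<bar>) \<longlongrightarrow> 0) (at 0)"
      by (auto intro!: tendsto_eq_intros)
  qed
  then show ?thesis unfolding h_def by (rule DERIV_imp_deriv)
qed


lemma cont_vec_nth[continuous_intros]: "continuous_on S g \<Longrightarrow> continuous_on S (\<lambda>x. (g x :: real^'n) $ i)"
  using bounded_linear.continuous_on[OF bounded_linear_vec_nth] by blast

locale dens =
  fixes \<rho> :: "real^'n \<Rightarrow> real"
  assumes rho_meas: "\<rho> \<in> borel_measurable borel"
    and rho_nonneg: "\<And>x. \<rho> x \<ge> 0"
    and rho_int: "integrable lborel \<rho>"
    and rho_prob: "integral\<^sup>L lborel \<rho> = 1"
    and rho_cpt: "compact (closure {x. \<rho> x \<noteq> 0})"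
    and rho_mom: "\<And>i j. integral\<^sup>L lborel (\<lambda>x. x $ i * x $ j * \<rho> x) = (if i = j then 1 else 0)"
begin

definition bs :: "(real^'n \<Rightarrow> real) \<Rightarrow> bool" where
  "bs \<phi> \<longleftrightarrow> \<phi> \<in> borel_measurable borel \<and> (\<exists>M. \<forall>x. \<rho> x \<noteq> 0 \<longrightarrow> \<bar>\<phi> x\<bar> \<le> M)"

lemma int_rho:
  assumes "\<phi> \<in> borel_measurable borel" "\<And>x. \<rho> x \<noteq> 0 \<Longrightarrow> \<bar>\<phi> x\<bar> \<le> M"
  shows "integrable lborel (\<lambda>x. \<phi> x * \<rho> x)"
proof (rule Bochner_Integration.integrable_bound[of lborel "\<lambda>x. M * \<rho> x"])
  show "integrable lborel (\<lambda>x. M * \<rho> x)" using rho_int by simp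
  show "(\<lambda>x. \<phi> x * \<rho> x) \<in> borel_measurable lborel" using assms(1) rho_meas by simp
  show "AE x in lborel. norm (\<phi> x * \<rho> x) \<le> norm (M * \<rho> x)"
  proof (rule AE_I2)
    fix x
    show "norm (\<phi> x * \<rho> x) \<le> norm (M * \<rho> x)"
    proof (cases "\<rho> x = 0")
      case False
      then have "\<bar>\<phi> x\<bar> \<le> \<bar>M\<bar>" using assms(2)[of x] by linarith
      then have "\<bar>\<phi> x\<bar> * \<bar>\<rho> x\<bar> \<le> \<bar>M\<bar> * \<bar>\<rho> x\<bar>" by (rule mult_right_mono) simp
      then show ?thesis by (simp add: abs_mult)
    qed simp
  qed
qed

lemma int_rho_bound:
  assumes "\<phi> \<in> borel_measurable borel" "\<And>x. \<rho> x \<noteq> 0 \<Longrightarrow> \<bar>\<phi> x\<bar> \<le> M"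
  shows "\<bar>integral\<^sup>L lborel (\<lambda>x. \<phi> x * \<rho> x)\<bar> \<le> M"
proof -
  have "\<bar>integral\<^sup>L lborel (\<lambda>x. \<phi> x * \<rho> x)\<bar> \<le> integral\<^sup>L lborel (\<lambda>x. M * \<rho> x)"
  proof (rule integral_abs_bound_integral)
    show "integrable lborel (\<lambda>x. \<phi> x * \<rho> x)" by (rule int_rho[OF assms])
    show "integrable lborel (\<lambda>x. M * \<rho> x)" using rho_int by simp
    fix x
    show "\<bar>\<phi> x * \<rho> x\<bar> \<le> M * \<rho> x"
    proof (cases "\<rho> x = 0")
      case False
      then have "\<bar>\<phi> x\<bar> * \<rho> x \<le> M * \<rho> x" using assms(2)[of x] rho_nonneg[of x] by (intro mult_right_mono) auto
      then show ?thesis using rho_nonneg[of x] by (simp add: abs_mult)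
    qed simp
  qed
  also have "\<dots> = M" using rho_prob by simp
  finally show ?thesis .
qed

lemma bs_int: "bs \<phi> \<Longrightarrow> integrable lborel (\<lambda>x. \<phi> x * \<rho> x)"
  unfolding bs_def using int_rho by blast

lemma supp_bound: obtains R where "R \<ge> 1" "\<And>x. \<rho> x \<noteq> 0 \<Longrightarrow> norm x \<le> R"
proof -
  have "\<exists>R0. \<forall>x\<in>closure {x. \<rho> x \<noteq> 0}. norm x \<le> R0"
    using compact_imp_bounded[OF rho_cpt] by (simp only: Elementary_Metric_Spaces.bounded_iff)
  then obtain R0 where "\<forall>x\<in>closure {x. \<rho> x \<noteq> 0}. norm x \<le> R0" ..
  then have "\<And>x. \<rho> x \<noteq> 0 \<Longrightarrow> norm x \<le> max R0 1"
  proof -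
    fix x assume A: "\<forall>x\<in>closure {x. \<rho> x \<noteq> 0}. norm x \<le> R0" and "\<rho> x \<noteq> 0"
    have "x \<in> closure {x. \<rho> x \<noteq> 0}" by (rule subsetD[OF closure_subset]) (simp add: \<open>\<rho> x \<noteq> 0\<close>)
    with A have "norm x \<le> R0" by (rule bspec)
    then show "norm x \<le> max R0 1" by (simp add: le_max_iff_disj)
  qed
  then show ?thesis using that[of "max R0 1"] by simp
qed

lemma cont_bound:
  fixes g :: "real^'n \<Rightarrow> real"
  assumes "continuous_on UNIV g"
  obtains M where "\<And>x. \<rho> x \<noteq> 0 \<Longrightarrow> \<bar>g x\<bar> \<le> M"
proof -
  have "compact (g ` closure {x. \<rho> x \<noteq> 0})"
    by (rule compact_continuous_image[OF continuous_on_subset[OF assms] rho_cpt]) simp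
  then have "\<exists>M. \<forall>y\<in>g ` closure {x. \<rho> x \<noteq> 0}. norm y \<le> M"
    using compact_imp_bounded[OF \<open>compact (g ` closure {x. \<rho> x \<noteq> 0})\<close>] by (simp only: Elementary_Metric_Spaces.bounded_iff)
  then obtain M where "\<forall>y\<in>g ` closure {x. \<rho> x \<noteq> 0}. norm y \<le> M" ..
  then have "\<And>x. \<rho> x \<noteq> 0 \<Longrightarrow> \<bar>g x\<bar> \<le> M"
  proof -
    fix x assume "\<forall>y\<in>g ` closure {x. \<rho> x \<noteq> 0}. norm y \<le> M" "\<rho> x \<noteq> 0"
    have "x \<in> closure {x. \<rho> x \<noteq> 0}" by (rule subsetD[OF closure_subset]) (simp add: \<open>\<rho> x \<noteq> 0\<close>)
    then have "g x \<in> g ` closure {x. \<rho> x \<noteq> 0}" by (rule imageI)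
    with \<open>\<forall>y\<in>g ` closure {x. \<rho> x \<noteq> 0}. norm y \<le> M\<close> have "norm (g x) \<le> M" by (rule bspec)
    then show "\<bar>g x\<bar> \<le> M" by simp
  qed
  then show ?thesis using that by blast
qed

lemma bs_cont: "continuous_on UNIV g \<Longrightarrow> bs g"
proof -
  assume c: "continuous_on UNIV g"
  obtain M where "\<And>x. \<rho> x \<noteq> 0 \<Longrightarrow> \<bar>g x\<bar> \<le> M" using cont_bound[OF c] by blast
  then show "bs g" unfolding bs_def using borel_measurable_continuous_onI[OF c] by blast
qed

lemma bs_add: "bs g \<Longrightarrow> bs h \<Longrightarrow> bs (\<lambda>x. g x + h x)"
  unfolding bs_def
proof (elim conjE exE, intro conjI)
  fix M1 M2 assume a: "\<forall>x. \<rho> x \<noteq> 0 \<longrightarrow> \<bar>g x\<bar> \<le> M1" "\<forall>x. \<rho> x \<noteq> 0 \<longrightarrow> \<bar>h x\<bar> \<le> M2"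
  show "\<exists>M. \<forall>x. \<rho> x \<noteq> 0 \<longrightarrow> \<bar>g x + h x\<bar> \<le> M"
  proof (intro exI[of _ "M1 + M2"] allI impI)
    fix x assume "\<rho> x \<noteq> 0"
    then have "\<bar>g x\<bar> \<le> M1" "\<bar>h x\<bar> \<le> M2" using a by auto
    moreover have "\<bar>g x + h x\<bar> \<le> \<bar>g x\<bar> + \<bar>h x\<bar>" by (rule abs_triangle_ineq)
    ultimately show "\<bar>g x + h x\<bar> \<le> M1 + M2" by linarith
  qed
next
  assume "g \<in> borel_measurable borel" "h \<in> borel_measurable borel"
  then show "(\<lambda>x. g x + h x) \<in> borel_measurable borel" by (rule borel_measurable_add)
qed

lemma bs_diff: "bs g \<Longrightarrow> bs h \<Longrightarrow> bs (\<lambda>x. g x - h x)"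
  unfolding bs_def
proof (elim conjE exE, intro conjI)
  fix M1 M2 assume a: "\<forall>x. \<rho> x \<noteq> 0 \<longrightarrow> \<bar>g x\<bar> \<le> M1" "\<forall>x. \<rho> x \<noteq> 0 \<longrightarrow> \<bar>h x\<bar> \<le> M2"
  show "\<exists>M. \<forall>x. \<rho> x \<noteq> 0 \<longrightarrow> \<bar>g x - h x\<bar> \<le> M"
  proof (intro exI[of _ "M1 + M2"] allI impI)
    fix x assume "\<rho> x \<noteq> 0"
    then have "\<bar>g x\<bar> \<le> M1" "\<bar>h x\<bar> \<le> M2" using a by auto
    moreover have "\<bar>g x - h x\<bar> \<le> \<bar>g x\<bar> + \<bar>h x\<bar>" by (rule abs_triangle_ineq4)
    ultimately show "\<bar>g x - h x\<bar> \<le> M1 + M2" by linarith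
  qed
next
  assume "g \<in> borel_measurable borel" "h \<in> borel_measurable borel"
  then show "(\<lambda>x. g x - h x) \<in> borel_measurable borel" by (rule borel_measurable_diff)
qed

lemma bs_mult: "bs g \<Longrightarrow> bs h \<Longrightarrow> bs (\<lambda>x. g x * h x)"
  unfolding bs_def
proof (elim conjE exE, intro conjI)
  fix M1 M2 assume a: "\<forall>x. \<rho> x \<noteq> 0 \<longrightarrow> \<bar>g x\<bar> \<le> M1" "\<forall>x. \<rho> x \<noteq> 0 \<longrightarrow> \<bar>h x\<bar> \<le> M2"
  show "\<exists>M. \<forall>x. \<rho> x \<noteq> 0 \<longrightarrow> \<bar>g x * h x\<bar> \<le> M"
  proof (intro exI[of _ "M1 * M2"] allI impI)
    fix x assume "\<rho> x \<noteq> 0"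
    then have g: "\<bar>g x\<bar> \<le> M1" and h: "\<bar>h x\<bar> \<le> M2" using a by auto
    have "0 \<le> M1" using g abs_ge_zero[of "g x"] by linarith
    have "\<bar>g x\<bar> * \<bar>h x\<bar> \<le> M1 * M2" by (rule mult_mono[OF g h \<open>0 \<le> M1\<close> abs_ge_zero])
    then show "\<bar>g x * h x\<bar> \<le> M1 * M2" by (simp only: abs_mult)
  qed
next
  assume "g \<in> borel_measurable borel" "h \<in> borel_measurable borel"
  then show "(\<lambda>x. g x * h x) \<in> borel_measurable borel" by (rule borel_measurable_times)
qed

lemma bs_sum: "finite A \<Longrightarrow> (\<And>l. l \<in> A \<Longrightarrow> bs (g l)) \<Longrightarrow> bs (\<lambda>x. \<Sum>l\<in>A. g l x)"
proof (induction A rule: finite_induct)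
  case empty then show ?case by (simp add: bs_cont)
next
  case (insert a A) then show ?case by (simp add: bs_add)
qed

end


lemma abs_mult_le: "\<bar>X\<bar> \<le> A \<Longrightarrow> \<bar>Y\<bar> \<le> B \<Longrightarrow> \<bar>X * Y\<bar> \<le> A * (B::real)"
proof -
  assume a: "\<bar>X\<bar> \<le> A" and b: "\<bar>Y\<bar> \<le> B"
  have "0 \<le> A" using a abs_ge_zero[of X] by linarith
  have "\<bar>X\<bar> * \<bar>Y\<bar> \<le> A * B" by (rule mult_mono[OF a b \<open>0 \<le> A\<close> abs_ge_zero])
  then show ?thesis by (simp only: abs_mult)
qed

lemma abs_add_le: "\<bar>X\<bar> \<le> A \<Longrightarrow> \<bar>Y\<bar> \<le> B \<Longrightarrow> \<bar>X + Y\<bar> \<le> A + (B::real)"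
  using abs_triangle_ineq[of X Y] by linarith

lemma abs_diff_le: "\<bar>X\<bar> \<le> A \<Longrightarrow> \<bar>Y\<bar> \<le> B \<Longrightarrow> \<bar>X - Y\<bar> \<le> A + (B::real)"
  using abs_triangle_ineq4[of X Y] by linarith

lemma le_eq_trans: "a \<le> b \<Longrightarrow> b = c \<Longrightarrow> a \<le> (c::real)" by simp

context sig
begin

lemma S1: assumes "0 \<le> c" "0 \<le> q" "\<bar>u\<bar> \<le> c * q"
  shows "\<bar>\<sigma> u - u\<bar> \<le> CL * c^3 * q^3"
proof -
  have "\<bar>u\<bar>^3 \<le> (c * q)^3" by (rule power_mono[OF assms(3) abs_ge_zero])
  then have "CL * \<bar>u\<bar>^3 \<le> CL * (c * q)^3" by (rule mult_left_mono[OF _ CL_nonneg])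
  then show ?thesis using L3[of u] by (simp add: power_mult_distrib mult.assoc)
qed

lemma S2: assumes "0 \<le> c" "0 \<le> q" "q \<le> 1" "\<bar>u\<bar> \<le> c * q"
  shows "\<bar>\<sigma> u\<bar> \<le> c * (1 + CL * c^2) * q"
proof -
  have "q^3 \<le> q^1" by (rule power_decreasing) (use assms in auto)
  then have "CL * c^3 * q^3 \<le> CL * c^3 * q"
    using CL_nonneg assms(1) by (intro mult_left_mono) auto
  moreover have "\<bar>\<sigma> u\<bar> \<le> \<bar>u\<bar> + \<bar>\<sigma> u - u\<bar>" by linarith
  moreover have "c * (1 + CL * c^2) * q = c * q + CL * c^3 * q" by algebra
  ultimately show ?thesis using S1[OF assms(1,2,4)] assms(4) by linarith
qed

lemma S3: assumes "0 \<le> c" "0 \<le> q" "\<bar>u\<bar> \<le> c * q"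
  shows "\<bar>\<sigma>1 u - 1\<bar> \<le> CL * c^2 * q^2"
proof -
  have "\<bar>u\<bar>^2 \<le> (c * q)^2" by (rule power_mono[OF assms(3) abs_ge_zero])
  then have "CL * u^2 \<le> CL * (c * q)^2" by (intro mult_left_mono[OF _ CL_nonneg]) simp
  then show ?thesis using L2'[of u] by (simp add: power_mult_distrib mult.assoc)
qed

lemma S4: assumes "0 \<le> c" "0 \<le> q" "q \<le> 1" "\<bar>u\<bar> \<le> c * q"
  shows "\<bar>\<sigma>1 u\<bar> \<le> 1 + CL * c^2"
proof -
  have "q^2 \<le> 1" using assms(2,3) by (simp add: power_le_one)
  then have "CL * c^2 * q^2 \<le> CL * c^2 * 1"
    using CL_nonneg by (intro mult_left_mono) auto
  then show ?thesis using S3[OF assms(1,2,4)] by linarith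
qed

lemma S5: assumes "0 \<le> c" "0 \<le> q" "q \<le> 1" "\<bar>u\<bar> \<le> c * q" "\<bar>v\<bar> \<le> c * q"
  shows "\<bar>\<sigma> u * \<sigma> v - u * v\<bar> \<le> CL * c^4 * (2 + CL * c^2) * q^4"
proof -
  have e: "\<sigma> u * \<sigma> v - u * v = (\<sigma> u - u) * \<sigma> v + u * (\<sigma> v - v)" by algebra
  have "\<bar>(\<sigma> u - u) * \<sigma> v + u * (\<sigma> v - v)\<bar> \<le> (CL * c^3 * q^3) * (c * (1 + CL * c^2) * q) + (c * q) * (CL * c^3 * q^3)"
    by (intro abs_add_le abs_mult_le S1 S2 assms)
  also have "\<dots> = CL * c^4 * (2 + CL * c^2) * q^4" by algebra
  finally show ?thesis unfolding e .
qed

lemma S6: assumes "0 \<le> c" "0 \<le> q" "q \<le> 1" "\<bar>u\<bar> \<le> c * q" "\<bar>v\<bar> \<le> c * q"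
  shows "\<bar>\<sigma> u * \<sigma>1 v - u\<bar> \<le> CL * c^3 * (2 + CL * c^2) * q^3"
proof -
  have e: "\<sigma> u * \<sigma>1 v - u = (\<sigma> u - u) * \<sigma>1 v + u * (\<sigma>1 v - 1)" by algebra
  have "\<bar>(\<sigma> u - u) * \<sigma>1 v + u * (\<sigma>1 v - 1)\<bar> \<le> (CL * c^3 * q^3) * (1 + CL * c^2) + (c * q) * (CL * c^2 * q^2)"
    by (intro abs_add_le abs_mult_le S1 S3 S4[OF assms(1,2,3,5)] assms)
  also have "\<dots> = CL * c^3 * (2 + CL * c^2) * q^3" by algebra
  finally show ?thesis unfolding e .
qed

lemma cont_sigma[continuous_intros]: "continuous_on S g \<Longrightarrow> continuous_on S (\<lambda>x. \<sigma> (g x))"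
proof -
  assume g: "continuous_on S g"
  have "continuous_on UNIV \<sigma>"
    by (rule continuous_at_imp_continuous_on) (use s1 DERIV_isCont in blast)
  then show ?thesis by (rule continuous_on_compose2[OF _ g]) simp
qed

lemma cont_sigma1[continuous_intros]: "continuous_on S g \<Longrightarrow> continuous_on S (\<lambda>x. \<sigma>1 (g x))"
proof -
  assume g: "continuous_on S g"
  have "continuous_on UNIV \<sigma>1"
    by (rule continuous_at_imp_continuous_on) (use s2 DERIV_isCont in blast)
  then show ?thesis by (rule continuous_on_compose2[OF _ g]) simp
qed

end

lemma fnet_upd_a:
  assumes "k < m"
  shows "fnet \<sigma> m (a(k := a k + t)) w x = fnet \<sigma> m a w x + t * \<sigma> (w k \<bullet> x)"
proof -
  have "fnet \<sigma> m (a(k := a k + t)) w x = (\<Sum>l<m. a l * \<sigma> (w l \<bullet> x) + (if l = k then t * \<sigma> (w k \<bullet> x) else 0))"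
    unfolding fnet_def by (rule sum.cong) (auto simp: algebra_simps)
  also have "\<dots> = fnet \<sigma> m a w x + t * \<sigma> (w k \<bullet> x)"
    unfolding fnet_def sum.distrib using assms by simp
  finally show ?thesis .
qed

lemma fnet_upd_w:
  assumes "k < m"
  shows "fnet \<sigma> m a (w(k := w k + t *\<^sub>R axis i 1)) x
       = fnet \<sigma> m a w x + a k * (\<sigma> (w k \<bullet> x + t * x $ i) - \<sigma> (w k \<bullet> x))"
proof -
  have ax: "(w k + t *\<^sub>R axis i 1) \<bullet> x = w k \<bullet> x + t * x $ i"
    by (simp add: inner_add_left inner_axis')
  have "fnet \<sigma> m a (w(k := w k + t *\<^sub>R axis i 1)) x
     = (\<Sum>l<m. a l * \<sigma> (w l \<bullet> x) + (if l = k then a k * (\<sigma> (w k \<bullet> x + t * x $ i) - \<sigma> (w k \<bullet> x)) else 0))"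
    unfolding fnet_def by (rule sum.cong) (auto simp: algebra_simps ax inner_axis')
  also have "\<dots> = fnet \<sigma> m a w x + a k * (\<sigma> (w k \<bullet> x + t * x $ i) - \<sigma> (w k \<bullet> x))"
    unfolding fnet_def sum.distrib using assms by simp
  finally show ?thesis .
qed


locale full = sig \<sigma> \<sigma>1 \<sigma>2 \<sigma>3 CL + dens \<rho>
  for \<sigma> \<sigma>1 \<sigma>2 \<sigma>3 :: "real \<Rightarrow> real" and CL :: real and \<rho> :: "real^'n \<Rightarrow> real" +
  fixes f :: "real^'n \<Rightarrow> real" and j1 :: 'n
  assumes f_meas: "f \<in> borel_measurable borel"
    and f_bdd: "\<exists>B. \<forall>x\<in>closure {x. \<rho> x \<noteq> 0}. \<bar>f x\<bar> \<le> B"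
    and f_corr: "integral\<^sup>L lborel (\<lambda>x. (f x * \<rho> x) *\<^sub>R x) = axis j1 1"
begin

lemma f_bound: obtains B where "B \<ge> 0" "\<And>x. \<rho> x \<noteq> 0 \<Longrightarrow> \<bar>f x\<bar> \<le> B"
proof -
  obtain B where B: "\<forall>x\<in>closure {x. \<rho> x \<noteq> 0}. \<bar>f x\<bar> \<le> B" using f_bdd ..
  have "\<bar>f x\<bar> \<le> max B 0" if "\<rho> x \<noteq> 0" for x
  proof -
    have "x \<in> closure {x. \<rho> x \<noteq> 0}" by (rule subsetD[OF closure_subset]) (simp add: that)
    with B have "\<bar>f x\<bar> \<le> B" by (rule bspec)
    then show ?thesis by (simp add: le_max_iff_disj)
  qed
  then show ?thesis using that[of "max B 0"] by simp
qed

lemma f_bound_ex: "\<exists>B. B \<ge> 0 \<and> (\<forall>x. \<rho> x \<noteq> 0 \<longrightarrow> \<bar>f x\<bar> \<le> B)"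
proof -
  obtain B where B: "\<forall>x\<in>closure {x. \<rho> x \<noteq> 0}. \<bar>f x\<bar> \<le> B" using f_bdd ..
  have "\<bar>f x\<bar> \<le> max B 0" if "\<rho> x \<noteq> 0" for x
  proof -
    have "x \<in> closure {x. \<rho> x \<noteq> 0}" by (rule subsetD[OF closure_subset]) (simp add: that)
    with B have "\<bar>f x\<bar> \<le> B" by (rule bspec)
    then show ?thesis by (simp add: le_max_iff_disj)
  qed
  then show ?thesis by (intro exI[of _ "max B 0"]) simp
qed

lemma supp_bound_ex: "\<exists>R. R \<ge> 1 \<and> (\<forall>x. \<rho> x \<noteq> 0 \<longrightarrow> norm x \<le> R)"
proof -
  obtain R where "R \<ge> 1" "\<And>x. \<rho> x \<noteq> 0 \<Longrightarrow> norm x \<le> R" by (rule supp_bound) blast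
  then show ?thesis by blast
qed

lemma bs_f: "bs f"
proof -
  obtain B where "B \<ge> 0" "\<forall>x. \<rho> x \<noteq> 0 \<longrightarrow> \<bar>f x\<bar> \<le> B" using f_bound_ex by blast
  then show ?thesis unfolding bs_def using f_meas by blast
qed

lemma rb: "(\<rho> x \<noteq> 0 \<Longrightarrow> \<bar>E\<bar> \<le> Kt) \<Longrightarrow> \<bar>E * \<rho> x\<bar> \<le> Kt * \<rho> x"
proof (cases "\<rho> x = 0")
  case False
  assume "\<rho> x \<noteq> 0 \<Longrightarrow> \<bar>E\<bar> \<le> Kt"
  then have "\<bar>E\<bar> * \<rho> x \<le> Kt * \<rho> x" using False rho_nonneg[of x] by (intro mult_right_mono) auto
  then show ?thesis using rho_nonneg[of x] by (simp add: abs_mult)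
qed simp

lemma bs_fnet: "bs (\<lambda>x. fnet \<sigma> m a w x)"
  unfolding fnet_def by (rule bs_cont) (intro continuous_intros)

lemma I2: "integral\<^sup>L lborel (\<lambda>x. ((p \<bullet> x) * (v \<bullet> x)) * \<rho> x) = p \<bullet> v"
proof -
  have int: "integrable lborel (\<lambda>x. x $ i * x $ j * \<rho> x)" for i j
    by (rule bs_int[OF bs_cont]) (intro continuous_intros)
  have pw: "((p \<bullet> x) * (v \<bullet> x)) * \<rho> x = (\<Sum>i\<in>UNIV. \<Sum>j\<in>UNIV. (p $ i * v $ j) * (x $ i * x $ j * \<rho> x))" for x
  proof -
    have "((p \<bullet> x) * (v \<bullet> x)) * \<rho> x = (\<Sum>i\<in>UNIV. \<Sum>j\<in>UNIV. (p $ i * x $ i) * (v $ j * x $ j)) * \<rho> x"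
      by (simp only: inner_vec_def inner_real_def sum_product)
    also have "\<dots> = (\<Sum>i\<in>UNIV. \<Sum>j\<in>UNIV. (p $ i * x $ i) * (v $ j * x $ j) * \<rho> x)"
      by (simp only: sum_distrib_right)
    also have "\<dots> = (\<Sum>i\<in>UNIV. \<Sum>j\<in>UNIV. (p $ i * v $ j) * (x $ i * x $ j * \<rho> x))"
      by (simp only: mult_ac)
    finally show ?thesis .
  qed
  have "integral\<^sup>L lborel (\<lambda>x. ((p \<bullet> x) * (v \<bullet> x)) * \<rho> x)
      = integral\<^sup>L lborel (\<lambda>x. \<Sum>i\<in>UNIV. \<Sum>j\<in>UNIV. (p $ i * v $ j) * (x $ i * x $ j * \<rho> x))"
    by (simp only: pw)
  also have "\<dots> = (\<Sum>i\<in>UNIV. \<Sum>j\<in>UNIV. (p $ i * v $ j) * integral\<^sup>L lborel (\<lambda>x. x $ i * x $ j * \<rho> x))"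
    by (simp add: integral_sum int integrable_sum)
  also have "\<dots> = (\<Sum>i\<in>UNIV. p $ i * v $ i)"
    by (simp add: rho_mom if_distrib cong: if_cong)
  also have "\<dots> = p \<bullet> v" by (simp add: inner_vec_def inner_real_def)
  finally show ?thesis .
qed

lemma I1: "integral\<^sup>L lborel (\<lambda>x. (f x * (p \<bullet> x)) * \<rho> x) = p $ j1"
proof -
  obtain B where B0: "B \<ge> 0" and B1: "\<forall>x. \<rho> x \<noteq> 0 \<longrightarrow> \<bar>f x\<bar> \<le> B" using f_bound_ex by blast
  obtain R where R0: "R \<ge> 1" and R1: "\<forall>x. \<rho> x \<noteq> 0 \<longrightarrow> norm x \<le> R" using supp_bound_ex by blast
  note B = B0 B1[rule_format] and R = R0 R1[rule_format]
  have intV: "integrable lborel (\<lambda>x. (f x * \<rho> x) *\<^sub>R x)"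
  proof (rule Bochner_Integration.integrable_bound[of lborel "\<lambda>x. B * R * \<rho> x"])
    show "integrable lborel (\<lambda>x. B * R * \<rho> x)" using rho_int by simp
    show "(\<lambda>x. (f x * \<rho> x) *\<^sub>R x) \<in> borel_measurable lborel"
      using f_meas rho_meas by simp
    show "AE x in lborel. norm ((f x * \<rho> x) *\<^sub>R x) \<le> norm (B * R * \<rho> x)"
    proof (rule AE_I2)
      fix x
      have "\<bar>(f x * norm x) * \<rho> x\<bar> \<le> (B * R) * \<rho> x"
        by (rule rb, rule abs_mult_le) (use B R in auto)
      then show "norm ((f x * \<rho> x) *\<^sub>R x) \<le> norm (B * R * \<rho> x)"
        using rho_nonneg[of x] B R by (simp add: abs_mult mult_ac)
    qed
  qed
  have "p $ j1 = p \<bullet> axis j1 1" by (simp add: inner_axis inner_real_def)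
  also have "\<dots> = p \<bullet> integral\<^sup>L lborel (\<lambda>x. (f x * \<rho> x) *\<^sub>R x)" by (simp only: f_corr)
  also have "\<dots> = integral\<^sup>L lborel (\<lambda>x. p \<bullet> ((f x * \<rho> x) *\<^sub>R x))"
    by (rule integral_inner_right[symmetric]) (use intV in simp)
  also have "\<dots> = integral\<^sup>L lborel (\<lambda>x. (f x * (p \<bullet> x)) * \<rho> x)"
    by (rule Bochner_Integration.integral_cong) (simp_all add: mult_ac)
  finally show ?thesis by simp
qed

end


context full begin

lemma bs_sq: "bs g \<Longrightarrow> bs (\<lambda>x. (g x)\<^sup>2)"
  unfolding power2_eq_square by (rule bs_mult)

lemma dRa:
  assumes k: "k < m"
  shows "dR_a \<sigma> \<rho> f m a w k = integral\<^sup>L lborel (\<lambda>x. ((fnet \<sigma> m a w x - f x) * \<sigma> (w k \<bullet> x)) * \<rho> x)"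
proof -
  define F where "F t x = (1/2 * (fnet \<sigma> m (a(k := a k + t)) w x - f x)\<^sup>2) * \<rho> x" for t x
  define D where "D x = ((fnet \<sigma> m a w x - f x) * \<sigma> (w k \<bullet> x)) * \<rho> x" for x
  have risk_eq: "risk \<sigma> \<rho> f m (a(k := a k + t)) w = integral\<^sup>L lborel (F t)" for t
    unfolding risk_def F_def by (simp add: mult.assoc)
  have bsk: "bs (\<lambda>x. \<sigma> (w k \<bullet> x))" by (rule bs_cont) (intro continuous_intros)
  obtain Ms where Ms: "\<And>x. \<rho> x \<noteq> 0 \<Longrightarrow> \<bar>\<sigma> (w k \<bullet> x)\<bar> \<le> Ms"
    by (rule cont_bound[of "\<lambda>x. \<sigma> (w k \<bullet> x)"]) (intro continuous_intros, blast)
  have iF: "integrable lborel (F t)" for t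
    unfolding F_def
    by (intro bs_int bs_mult bs_sq bs_diff bs_fnet bs_f bs_cont[OF continuous_on_const])
  have iD: "integrable lborel D"
    unfolding D_def by (intro bs_int bs_mult bs_diff bs_fnet bs_f bsk)
  have b: "\<bar>F t x - F 0 x - t * D x\<bar> \<le> (1/2 * Ms\<^sup>2) * t\<^sup>2 * \<rho> x" for t x
  proof -
    have a0: "a(k := a k + 0) = a" by simp
    have e: "F t x - F 0 x - t * D x = (1/2 * t\<^sup>2 * (\<sigma> (w k \<bullet> x))\<^sup>2) * \<rho> x"
      unfolding F_def D_def a0 fnet_upd_a[OF k] by (simp add: power2_eq_square algebra_simps)
    have "\<bar>(1/2 * t\<^sup>2 * (\<sigma> (w k \<bullet> x))\<^sup>2) * \<rho> x\<bar> \<le> (1/2 * Ms\<^sup>2 * t\<^sup>2) * \<rho> x"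
    proof (rule rb)
      assume "\<rho> x \<noteq> 0"
      then have "\<bar>\<sigma> (w k \<bullet> x)\<bar> \<le> \<bar>Ms\<bar>" using Ms[of x] by linarith
      then have "(\<sigma> (w k \<bullet> x))\<^sup>2 \<le> Ms\<^sup>2" by (simp only: abs_le_square_iff)
      then have "1/2 * t\<^sup>2 * (\<sigma> (w k \<bullet> x))\<^sup>2 \<le> 1/2 * t\<^sup>2 * Ms\<^sup>2" by (intro mult_left_mono) auto
      then show "\<bar>1/2 * t\<^sup>2 * (\<sigma> (w k \<bullet> x))\<^sup>2\<bar> \<le> 1/2 * Ms\<^sup>2 * t\<^sup>2" by (simp add: mult_ac)
    qed
    then show ?thesis unfolding e by (simp add: mult_ac)
  qed
  have "dR_a \<sigma> \<rho> f m a w k = deriv (\<lambda>t. integral\<^sup>L lborel (F t)) 0"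
    unfolding dR_a_def risk_eq ..
  also have "\<dots> = integral\<^sup>L lborel D"
    by (rule deriv_lemma[OF iF iD rho_int b])
  finally show ?thesis unfolding D_def .
qed

lemma dRw:
  assumes k: "k < m"
  shows "dR_w \<sigma> \<rho> f m a w k $ i = integral\<^sup>L lborel (\<lambda>x. ((fnet \<sigma> m a w x - f x) * a k * \<sigma>1 (w k \<bullet> x) * x $ i) * \<rho> x)"
proof -
  define F where "F t x = (1/2 * (fnet \<sigma> m a (w(k := w k + t *\<^sub>R axis i 1)) x - f x)\<^sup>2) * \<rho> x" for t x
  define D where "D x = ((fnet \<sigma> m a w x - f x) * a k * \<sigma>1 (w k \<bullet> x) * x $ i) * \<rho> x" for x
  have risk_eq: "risk \<sigma> \<rho> f m a (w(k := w k + t *\<^sub>R axis i 1)) = integral\<^sup>L lborel (F t)" for t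
    unfolding risk_def F_def by (simp add: mult.assoc)
  have bsg: "bs (\<lambda>x. fnet \<sigma> m a w x - f x)" by (intro bs_diff bs_fnet bs_f)
  then obtain G where G: "\<forall>x. \<rho> x \<noteq> 0 \<longrightarrow> \<bar>fnet \<sigma> m a w x - f x\<bar> \<le> G" unfolding bs_def by blast
  obtain U where U: "\<And>x. \<rho> x \<noteq> 0 \<Longrightarrow> \<bar>w k \<bullet> x\<bar> \<le> U"
    by (rule cont_bound[of "\<lambda>x. w k \<bullet> x"]) (intro continuous_intros, blast)
  obtain R where R0: "R \<ge> 1" and R1: "\<forall>x. \<rho> x \<noteq> 0 \<longrightarrow> norm x \<le> R" using supp_bound_ex by blast
  have iF: "integrable lborel (F t)" for t
    unfolding F_def
    by (intro bs_int bs_mult bs_sq bs_diff bs_fnet bs_f bs_cont[OF continuous_on_const])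
  have iD: "integrable lborel D"
    unfolding D_def
    by (intro bs_int bs_mult bs_diff bs_fnet bs_f bs_cont continuous_intros)
  define A1 where "A1 = CL * (U + R) * R\<^sup>2"
  define A2 where "A2 = (1 + CL * (U + R)\<^sup>2) * R"
  define K where "K = G * \<bar>a k\<bar> * A1 + 1/2 * (a k)\<^sup>2 * A2\<^sup>2"
  have b: "\<bar>F t x - F 0 x - t * D x\<bar> \<le> K * t\<^sup>2 * \<rho> x" if t1: "\<bar>t\<bar> \<le> 1" for t x
  proof -
    define g where "g = fnet \<sigma> m a w x - f x"
    define u where "u = w k \<bullet> x"
    define s where "s = x $ i"
    define \<phi> where "\<phi> = \<sigma> (u + t * s) - \<sigma> u"
    have w0: "w(k := w k + 0 *\<^sub>R axis i 1) = w" by simp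
    have e: "F t x - F 0 x - t * D x = (g * a k * (\<phi> - t * s * \<sigma>1 u) + 1/2 * (a k)\<^sup>2 * \<phi>\<^sup>2) * \<rho> x"
      unfolding F_def D_def w0 fnet_upd_w[OF k] g_def u_def s_def \<phi>_def
      by (simp add: power2_eq_square algebra_simps)
    have "\<bar>(g * a k * (\<phi> - t * s * \<sigma>1 u) + 1/2 * (a k)\<^sup>2 * \<phi>\<^sup>2) * \<rho> x\<bar> \<le> (K * t\<^sup>2) * \<rho> x"
    proof (rule rb)
      assume rx: "\<rho> x \<noteq> 0"
      have ug: "\<bar>g\<bar> \<le> G" using G rx unfolding g_def by blast
      have uu: "\<bar>u\<bar> \<le> U" using U[OF rx] unfolding u_def .
      have "\<bar>s\<bar> \<le> norm x" unfolding s_def by (rule component_le_norm_cart)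
      then have us: "\<bar>s\<bar> \<le> R" using R1 rx by fastforce
      have uts: "\<bar>t * s\<bar> \<le> R * \<bar>t\<bar>"
      proof -
        have "\<bar>t\<bar> * \<bar>s\<bar> \<le> \<bar>t\<bar> * R" by (rule mult_left_mono[OF us]) simp
        then show ?thesis by (simp add: abs_mult mult_ac)
      qed
      have uts1: "\<bar>t * s\<bar> \<le> R"
      proof -
        have "R * \<bar>t\<bar> \<le> R * 1" by (rule mult_left_mono[OF t1]) (use R0 in simp)
        then show ?thesis using uts by simp
      qed
      have h1: "CL * (\<bar>u\<bar> + \<bar>t * s\<bar>) \<le> CL * (U + R)"
        by (rule mult_left_mono[OF _ CL_nonneg]) (use uu uts1 in linarith)
      have h2: "(t * s)\<^sup>2 \<le> R\<^sup>2 * t\<^sup>2"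
      proof -
        have "\<bar>s\<bar> \<le> \<bar>R\<bar>" using us by linarith
        then have "s\<^sup>2 \<le> R\<^sup>2" by (simp only: abs_le_square_iff)
        then have "t\<^sup>2 * s\<^sup>2 \<le> t\<^sup>2 * R\<^sup>2" by (rule mult_left_mono) simp
        then show ?thesis by (simp add: power_mult_distrib mult_ac)
      qed
      have h3: "CL * (\<bar>u\<bar> + \<bar>t * s\<bar>) * (t * s)\<^sup>2 \<le> CL * (U + R) * (R\<^sup>2 * t\<^sup>2)"
        by (rule mult_mono[OF h1 h2]) (use CL_nonneg uu R0 in auto)
      have p1: "\<bar>\<phi> - t * s * \<sigma>1 u\<bar> \<le> A1 * t\<^sup>2"
      proof -
        have "\<bar>\<phi> - t * s * \<sigma>1 u\<bar> \<le> CL * (\<bar>u\<bar> + \<bar>t * s\<bar>) * (t * s)\<^sup>2"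
          unfolding \<phi>_def by (rule L4)
        also have "\<dots> \<le> CL * (U + R) * (R\<^sup>2 * t\<^sup>2)" by (rule h3)
        also have "\<dots> = A1 * t\<^sup>2" unfolding A1_def by (simp add: mult_ac)
        finally show ?thesis .
      qed
      have h4: "(\<bar>u\<bar> + \<bar>t * s\<bar>)\<^sup>2 \<le> (U + R)\<^sup>2"
        by (rule power_mono) (use uu uts1 in auto)
      have h5: "1 + CL * (\<bar>u\<bar> + \<bar>t * s\<bar>)\<^sup>2 \<le> 1 + CL * (U + R)\<^sup>2"
        using mult_left_mono[OF h4 CL_nonneg] by linarith
      have h7: "\<bar>\<phi>\<bar> \<le> (1 + CL * (U + R)\<^sup>2) * (R * \<bar>t\<bar>)"
      proof -
        have "\<bar>\<phi>\<bar> \<le> (1 + CL * (\<bar>u\<bar> + \<bar>t * s\<bar>)\<^sup>2) * \<bar>t * s\<bar>"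
          unfolding \<phi>_def by (rule L5)
        also have "\<dots> \<le> (1 + CL * (U + R)\<^sup>2) * (R * \<bar>t\<bar>)"
          by (rule mult_mono[OF h5 uts]) (use CL_nonneg in auto)
        finally show ?thesis .
      qed
      have p2: "\<bar>\<phi>\<^sup>2\<bar> \<le> A2\<^sup>2 * t\<^sup>2"
      proof -
        have "\<bar>\<phi>\<bar>\<^sup>2 \<le> ((1 + CL * (U + R)\<^sup>2) * (R * \<bar>t\<bar>))\<^sup>2"
          by (rule power_mono[OF h7 abs_ge_zero])
        also have "\<dots> = A2\<^sup>2 * t\<^sup>2" unfolding A2_def by (simp add: power_mult_distrib mult_ac)
        finally show ?thesis by simp
      qed
      have "\<bar>g * a k * (\<phi> - t * s * \<sigma>1 u) + 1/2 * (a k)\<^sup>2 * \<phi>\<^sup>2\<bar>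
          \<le> (G * \<bar>a k\<bar>) * (A1 * t\<^sup>2) + (1/2 * (a k)\<^sup>2) * (A2\<^sup>2 * t\<^sup>2)"
        by (intro abs_add_le abs_mult_le p1 p2 ug order_refl) (simp_all add: abs_mult)
      also have "\<dots> = K * t\<^sup>2" unfolding K_def by (simp add: algebra_simps)
      finally show "\<bar>g * a k * (\<phi> - t * s * \<sigma>1 u) + 1/2 * (a k)\<^sup>2 * \<phi>\<^sup>2\<bar> \<le> K * t\<^sup>2" .
    qed
    then show ?thesis unfolding e by simp
  qed
  have "dR_w \<sigma> \<rho> f m a w k $ i = deriv (\<lambda>t. integral\<^sup>L lborel (F t)) 0"
  proof -
    have "(\<lambda>t. risk \<sigma> \<rho> f m a (w(k := w k + t *\<^sub>R axis i 1))) = (\<lambda>t. integral\<^sup>L lborel (F t))"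
      by (rule ext) (rule risk_eq)
    then show ?thesis unfolding dR_w_def by simp
  qed
  also have "\<dots> = integral\<^sup>L lborel D"
    by (rule deriv_lemma[OF iF iD rho_int b])
  finally show ?thesis unfolding D_def .
qed

end


context full begin

lemma hf_eq:
  assumes k: "k < m"
  shows "hot_f \<sigma> \<rho> f j1 m a w k = integral\<^sup>L lborel (\<lambda>x.
     (f x * (\<sigma> (w k \<bullet> x) - w k \<bullet> x)
      - (\<Sum>l<m. a l * (\<sigma> (w l \<bullet> x) * \<sigma> (w k \<bullet> x) - (w l \<bullet> x) * (w k \<bullet> x)))) * \<rho> x)"
proof -
  define P where "P = (\<Sum>l<m. a l *\<^sub>R w l)"
  have Px: "P \<bullet> x = (\<Sum>l<m. a l * (w l \<bullet> x))" for x by (simp add: P_def inner_sum_left)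
  have d1: "dR_a \<sigma> \<rho> f m a w k = integral\<^sup>L lborel (\<lambda>x. ((fnet \<sigma> m a w x - f x) * \<sigma> (w k \<bullet> x)) * \<rho> x)"
    by (rule dRa[OF k])
  have d2: "w k $ j1 = integral\<^sup>L lborel (\<lambda>x. (f x * (w k \<bullet> x)) * \<rho> x)" by (rule I1[symmetric])
  have d3: "(\<Sum>i\<in>UNIV. (\<Sum>l<m. a l * w l $ i) * w k $ i) = integral\<^sup>L lborel (\<lambda>x. ((P \<bullet> x) * (w k \<bullet> x)) * \<rho> x)"
    unfolding I2 by (simp add: P_def inner_vec_def inner_real_def)
  have iA: "integrable lborel (\<lambda>x. ((fnet \<sigma> m a w x - f x) * \<sigma> (w k \<bullet> x)) * \<rho> x)"
    by (intro bs_int bs_mult bs_diff bs_fnet bs_f bs_cont continuous_intros)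
  have iB: "integrable lborel (\<lambda>x. (f x * (w k \<bullet> x)) * \<rho> x)"
    by (intro bs_int bs_mult bs_f bs_cont continuous_intros)
  have iC: "integrable lborel (\<lambda>x. ((P \<bullet> x) * (w k \<bullet> x)) * \<rho> x)"
    by (intro bs_int bs_cont continuous_intros)
  have "hot_f \<sigma> \<rho> f j1 m a w k = integral\<^sup>L lborel (\<lambda>x. ((P \<bullet> x) * (w k \<bullet> x)) * \<rho> x)
      - integral\<^sup>L lborel (\<lambda>x. ((fnet \<sigma> m a w x - f x) * \<sigma> (w k \<bullet> x)) * \<rho> x)
      - integral\<^sup>L lborel (\<lambda>x. (f x * (w k \<bullet> x)) * \<rho> x)"
    unfolding hot_f_def d1 d2 d3 by simp
  also have "\<dots> = integral\<^sup>L lborel (\<lambda>x. ((P \<bullet> x) * (w k \<bullet> x)) * \<rho> x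
      - ((fnet \<sigma> m a w x - f x) * \<sigma> (w k \<bullet> x)) * \<rho> x - (f x * (w k \<bullet> x)) * \<rho> x)"
    using iA iB iC by simp
  also have "\<dots> = integral\<^sup>L lborel (\<lambda>x.
     (f x * (\<sigma> (w k \<bullet> x) - w k \<bullet> x)
      - (\<Sum>l<m. a l * (\<sigma> (w l \<bullet> x) * \<sigma> (w k \<bullet> x) - (w l \<bullet> x) * (w k \<bullet> x)))) * \<rho> x)"
  proof (rule Bochner_Integration.integral_cong[OF refl])
    fix x
    have "(\<Sum>l<m. a l * (\<sigma> (w l \<bullet> x) * \<sigma> (w k \<bullet> x) - (w l \<bullet> x) * (w k \<bullet> x)))
        = (\<Sum>l<m. (a l * \<sigma> (w l \<bullet> x)) * \<sigma> (w k \<bullet> x) - (a l * (w l \<bullet> x)) * (w k \<bullet> x))"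
      by (rule sum.cong) (simp_all add: algebra_simps)
    also have "\<dots> = fnet \<sigma> m a w x * \<sigma> (w k \<bullet> x) - (P \<bullet> x) * (w k \<bullet> x)"
      unfolding Px fnet_def by (simp add: sum_subtractf sum_distrib_right)
    finally have s1: "(\<Sum>l<m. a l * (\<sigma> (w l \<bullet> x) * \<sigma> (w k \<bullet> x) - (w l \<bullet> x) * (w k \<bullet> x)))
        = fnet \<sigma> m a w x * \<sigma> (w k \<bullet> x) - (P \<bullet> x) * (w k \<bullet> x)" .
    show "(P \<bullet> x) * (w k \<bullet> x) * \<rho> x - (fnet \<sigma> m a w x - f x) * \<sigma> (w k \<bullet> x) * \<rho> x - f x * (w k \<bullet> x) * \<rho> x
        = (f x * (\<sigma> (w k \<bullet> x) - w k \<bullet> x)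
      - (\<Sum>l<m. a l * (\<sigma> (w l \<bullet> x) * \<sigma> (w k \<bullet> x) - (w l \<bullet> x) * (w k \<bullet> x)))) * \<rho> x"
      unfolding s1 by (simp add: algebra_simps)
  qed
  finally show ?thesis .
qed

lemma hg_eq:
  assumes k: "k < m"
  shows "hot_g \<sigma> \<rho> f j1 m a w k $ i = integral\<^sup>L lborel (\<lambda>x.
     (a k * (f x * x $ i * (\<sigma>1 (w k \<bullet> x) - 1)
      - (\<Sum>l<m. a l * (\<sigma> (w l \<bullet> x) * \<sigma>1 (w k \<bullet> x) - w l \<bullet> x) * x $ i))) * \<rho> x)"
proof -
  define P where "P = (\<Sum>l<m. a l *\<^sub>R w l)"
  have Px: "P \<bullet> x = (\<Sum>l<m. a l * (w l \<bullet> x))" for x by (simp add: P_def inner_sum_left)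
  have ax: "axis i 1 \<bullet> x = x $ i" for x :: "real^'n" by (simp add: inner_axis' inner_real_def)
  have d1: "dR_w \<sigma> \<rho> f m a w k $ i = integral\<^sup>L lborel (\<lambda>x. ((fnet \<sigma> m a w x - f x) * a k * \<sigma>1 (w k \<bullet> x) * x $ i) * \<rho> x)"
    by (rule dRw[OF k])
  have d2: "axis j1 1 $ i = integral\<^sup>L lborel (\<lambda>x. (f x * x $ i) * \<rho> x)"
  proof -
    have "axis j1 1 $ i = (axis i (1::real)) $ j1" by (auto simp: axis_def)
    then show ?thesis using I1[of "axis i 1", unfolded ax] by simp
  qed
  have d3: "P $ i = integral\<^sup>L lborel (\<lambda>x. ((P \<bullet> x) * x $ i) * \<rho> x)"
    using I2[of P "axis i 1", unfolded ax] by (simp add: inner_axis inner_real_def)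
  have iA: "integrable lborel (\<lambda>x. ((fnet \<sigma> m a w x - f x) * a k * \<sigma>1 (w k \<bullet> x) * x $ i) * \<rho> x)"
    by (intro bs_int bs_mult bs_diff bs_fnet bs_f bs_cont continuous_intros)
  have iB: "integrable lborel (\<lambda>x. (f x * x $ i) * \<rho> x)"
    by (intro bs_int bs_mult bs_f bs_cont continuous_intros)
  have iC: "integrable lborel (\<lambda>x. ((P \<bullet> x) * x $ i) * \<rho> x)"
    by (intro bs_int bs_cont continuous_intros)
  have "hot_g \<sigma> \<rho> f j1 m a w k $ i = a k * integral\<^sup>L lborel (\<lambda>x. ((P \<bullet> x) * x $ i) * \<rho> x)
      - integral\<^sup>L lborel (\<lambda>x. ((fnet \<sigma> m a w x - f x) * a k * \<sigma>1 (w k \<bullet> x) * x $ i) * \<rho> x)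
      - a k * integral\<^sup>L lborel (\<lambda>x. (f x * x $ i) * \<rho> x)"
    unfolding hot_g_def using d1 d2 d3 by (simp add: P_def algebra_simps)
  also have "\<dots> = integral\<^sup>L lborel (\<lambda>x. a k * (((P \<bullet> x) * x $ i) * \<rho> x)
      - ((fnet \<sigma> m a w x - f x) * a k * \<sigma>1 (w k \<bullet> x) * x $ i) * \<rho> x - a k * ((f x * x $ i) * \<rho> x))"
    using iA iB iC by simp
  also have "\<dots> = integral\<^sup>L lborel (\<lambda>x.
     (a k * (f x * x $ i * (\<sigma>1 (w k \<bullet> x) - 1)
      - (\<Sum>l<m. a l * (\<sigma> (w l \<bullet> x) * \<sigma>1 (w k \<bullet> x) - w l \<bullet> x) * x $ i))) * \<rho> x)"
  proof (rule Bochner_Integration.integral_cong[OF refl])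
    fix x
    have "(\<Sum>l<m. a l * (\<sigma> (w l \<bullet> x) * \<sigma>1 (w k \<bullet> x) - w l \<bullet> x) * x $ i)
        = (\<Sum>l<m. (a l * \<sigma> (w l \<bullet> x)) * (\<sigma>1 (w k \<bullet> x) * x $ i) - (a l * (w l \<bullet> x)) * x $ i)"
      by (rule sum.cong) (simp_all add: algebra_simps)
    also have "\<dots> = fnet \<sigma> m a w x * (\<sigma>1 (w k \<bullet> x) * x $ i) - (P \<bullet> x) * x $ i"
      unfolding Px fnet_def by (simp add: sum_subtractf sum_distrib_right)
    finally have s1: "(\<Sum>l<m. a l * (\<sigma> (w l \<bullet> x) * \<sigma>1 (w k \<bullet> x) - w l \<bullet> x) * x $ i)
        = fnet \<sigma> m a w x * (\<sigma>1 (w k \<bullet> x) * x $ i) - (P \<bullet> x) * x $ i" .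
    show "a k * (((P \<bullet> x) * x $ i) * \<rho> x)
      - ((fnet \<sigma> m a w x - f x) * a k * \<sigma>1 (w k \<bullet> x) * x $ i) * \<rho> x - a k * ((f x * x $ i) * \<rho> x)
      = (a k * (f x * x $ i * (\<sigma>1 (w k \<bullet> x) - 1)
      - (\<Sum>l<m. a l * (\<sigma> (w l \<bullet> x) * \<sigma>1 (w k \<bullet> x) - w l \<bullet> x) * x $ i))) * \<rho> x"
      unfolding s1 by (simp add: algebra_simps)
  qed
  finally show ?thesis .
qed

end


lemma qmax_ge:
  assumes k: "k < m"
  shows "\<bar>a k\<bar> \<le> qmax m a w" "\<bar>w k $ i\<bar> \<le> qmax m a w"
proof -
  let ?S = "\<Union>k\<in>{..<m}. insert \<bar>a k\<bar> (range (\<lambda>i. \<bar>w k $ i\<bar>))"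
  have fin: "finite ?S" by simp
  have "\<bar>a k\<bar> \<in> ?S" using k by blast
  then show "\<bar>a k\<bar> \<le> qmax m a w" unfolding qmax_def by (rule Max_ge[OF fin])
  have "\<bar>w k $ i\<bar> \<in> ?S" using k by blast
  then show "\<bar>w k $ i\<bar> \<le> qmax m a w" unfolding qmax_def by (rule Max_ge[OF fin])
qed

lemma norm_w_le:
  assumes k: "k < m"
  shows "norm (w k :: real^'n) \<le> real CARD('n) * qmax m a w"
proof -
  have "norm (w k) \<le> (\<Sum>i\<in>UNIV. \<bar>w k $ i\<bar>)" by (rule norm_le_l1_cart)
  also have "\<dots> \<le> of_nat (card (UNIV :: 'n set)) * qmax m a w"
    by (rule sum_bounded_above) (rule qmax_ge(2)[OF k])
  finally show ?thesis by simp
qed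

lemma comb_le:
  fixes \<alpha> \<beta> X Y :: real
  assumes "0 \<le> \<alpha>" "0 \<le> \<beta>" "0 \<le> X" "0 \<le> Y"
  shows "\<alpha> * X + \<beta> * Y \<le> (\<alpha> + \<beta>) * (X + Y)"
proof -
  have "(\<alpha> + \<beta>) * (X + Y) = \<alpha> * X + \<beta> * Y + (\<alpha> * Y + \<beta> * X)" by algebra
  moreover have "0 \<le> \<alpha> * Y + \<beta> * X" using assms by simp
  ultimately show ?thesis by linarith
qed

context full begin

lemma main:
  "\<exists>C>0. \<forall>m\<ge>1. \<forall>(a::nat \<Rightarrow> real) (w::nat \<Rightarrow> real^'n).
           qmax m a w \<le> 1 \<longrightarrow>
           (\<forall>k<m. \<bar>hot_f \<sigma> \<rho> f j1 m a w k\<bar> \<le> C * (qmax m a w ^ 3 + real m * qmax m a w ^ 5)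
                \<and> norm (hot_g \<sigma> \<rho> f j1 m a w k) \<le> C * (qmax m a w ^ 3 + real m * qmax m a w ^ 5))"
proof -
  obtain B where B0: "B \<ge> 0" and B1: "\<forall>x. \<rho> x \<noteq> 0 \<longrightarrow> \<bar>f x\<bar> \<le> B" using f_bound_ex by blast
  obtain R where R0: "R \<ge> 1" and R1: "\<forall>x. \<rho> x \<noteq> 0 \<longrightarrow> norm x \<le> R" using supp_bound_ex by blast
  define N where "N = real CARD('n)"
  define c where "c = N * R"
  have N0: "N \<ge> 0" unfolding N_def by simp
  have c0: "c \<ge> 0" unfolding c_def using N0 R0 by simp
  define K5 where "K5 = CL * c^4 * (2 + CL * c^2)"
  define K6 where "K6 = CL * c^3 * (2 + CL * c^2)"
  have K50: "K5 \<ge> 0" unfolding K5_def using CL_nonneg c0 by simp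
  have K60: "K6 \<ge> 0" unfolding K6_def using CL_nonneg c0 by simp
  define C1 where "C1 = B * CL * c^3 + K5"
  define C2 where "C2 = B * R * CL * c^2 + R * K6"
  have C10: "C1 \<ge> 0" unfolding C1_def using B0 CL_nonneg c0 K50 by simp
  have C20: "C2 \<ge> 0" unfolding C2_def using B0 R0 CL_nonneg c0 K60 by simp
  define C where "C = 1 + C1 + N * C2"
  have NC20: "N * C2 \<ge> 0" using N0 C20 by simp
  have Cpos: "C > 0" unfolding C_def using C10 NC20 by linarith
  show ?thesis
  proof (rule exI[of _ C], rule conjI[OF Cpos], intro allI impI)
    fix m :: nat and a :: "nat \<Rightarrow> real" and w :: "nat \<Rightarrow> real^'n" and k :: nat
    assume m1: "1 \<le> m" and q1: "qmax m a w \<le> 1" and k: "k < m"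
    define q where "q = qmax m a w"
    have aq: "\<bar>a l\<bar> \<le> q" if "l < m" for l unfolding q_def by (rule qmax_ge(1)[OF that])
    have q0: "0 \<le> q" using aq[OF k] by linarith
    have q1': "q \<le> 1" using q1 unfolding q_def .
    have uq: "\<bar>w l \<bullet> x\<bar> \<le> c * q" if "l < m" "\<rho> x \<noteq> 0" for l x
    proof -
      have "\<bar>w l \<bullet> x\<bar> \<le> norm (w l) * norm x" by (rule Cauchy_Schwarz_ineq2)
      also have "\<dots> \<le> (N * q) * R"
        by (rule mult_mono) (use norm_w_le[OF that(1), of w a] R1 that(2) N0 q0 in \<open>auto simp: N_def q_def\<close>)
      also have "\<dots> = c * q" unfolding c_def by (simp add: mult_ac)
      finally show ?thesis .
    qed
    have xi: "\<bar>x $ i\<bar> \<le> R" if "\<rho> x \<noteq> 0" for x i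
      using component_le_norm_cart[of x i] R1 that by fastforce
    have fb: "\<bar>f x\<bar> \<le> B" if "\<rho> x \<noteq> 0" for x using B1 that by blast
    define P3 where "P3 = q ^ 3 + real m * q ^ 5"
    have P30: "P3 \<ge> 0" unfolding P3_def using q0 by simp
    have CC: "C1 \<le> C" "N * C2 \<le> C" unfolding C_def using C10 NC20 by linarith+
    have CP: "C1 * P3 \<le> C * P3" "(N * C2) * P3 \<le> C * P3"
      by (rule mult_right_mono[OF CC(1) P30], rule mult_right_mono[OF CC(2) P30])
    have "\<bar>hot_f \<sigma> \<rho> f j1 m a w k\<bar> \<le> C1 * P3"
    proof -
      let ?E = "\<lambda>x. f x * (\<sigma> (w k \<bullet> x) - w k \<bullet> x)
        - (\<Sum>l<m. a l * (\<sigma> (w l \<bullet> x) * \<sigma> (w k \<bullet> x) - (w l \<bullet> x) * (w k \<bullet> x)))"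
      have bsE: "bs ?E"
        by (intro bs_diff bs_mult bs_f bs_cont continuous_intros)
      have "\<bar>integral\<^sup>L lborel (\<lambda>x. ?E x * \<rho> x)\<bar> \<le> B * (CL * c^3 * q^3) + real m * (q * (K5 * q^4))"
      proof (rule int_rho_bound)
        show "?E \<in> borel_measurable borel" using bsE unfolding bs_def by blast
        fix x assume rx: "\<rho> x \<noteq> 0"
        have t1: "\<bar>f x * (\<sigma> (w k \<bullet> x) - w k \<bullet> x)\<bar> \<le> B * (CL * c^3 * q^3)"
          by (intro abs_mult_le fb rx S1 c0 q0 uq k)
        have "\<bar>\<Sum>l<m. a l * (\<sigma> (w l \<bullet> x) * \<sigma> (w k \<bullet> x) - (w l \<bullet> x) * (w k \<bullet> x))\<bar>
            \<le> (\<Sum>l<m. \<bar>a l * (\<sigma> (w l \<bullet> x) * \<sigma> (w k \<bullet> x) - (w l \<bullet> x) * (w k \<bullet> x))\<bar>)" by (rule sum_abs)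
        also have "\<dots> \<le> of_nat (card {..<m}) * (q * (K5 * q^4))"
        proof (rule sum_bounded_above)
          fix l assume "l \<in> {..<m}"
          then have l: "l < m" by simp
          show "\<bar>a l * (\<sigma> (w l \<bullet> x) * \<sigma> (w k \<bullet> x) - (w l \<bullet> x) * (w k \<bullet> x))\<bar> \<le> q * (K5 * q^4)"
            unfolding K5_def by (intro abs_mult_le aq l S5 c0 q0 q1' uq k rx)
        qed
        finally have t2: "\<bar>\<Sum>l<m. a l * (\<sigma> (w l \<bullet> x) * \<sigma> (w k \<bullet> x) - (w l \<bullet> x) * (w k \<bullet> x))\<bar>
            \<le> real m * (q * (K5 * q^4))" by simp
        show "\<bar>?E x\<bar> \<le> B * (CL * c^3 * q^3) + real m * (q * (K5 * q^4))"
          by (rule abs_diff_le[OF t1 t2])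
      qed
      also have "B * (CL * c^3 * q^3) + real m * (q * (K5 * q^4)) = (B * CL * c^3) * q^3 + K5 * (real m * q^5)"
        by algebra
      also have "\<dots> \<le> C1 * P3" unfolding C1_def P3_def
        by (rule comb_le) (use B0 CL_nonneg c0 K50 q0 in simp_all)
      finally show ?thesis unfolding hf_eq[OF k] .
    qed
    then have F: "\<bar>hot_f \<sigma> \<rho> f j1 m a w k\<bar> \<le> C * P3" using CP(1) by linarith
    have gi: "\<bar>hot_g \<sigma> \<rho> f j1 m a w k $ i\<bar> \<le> C2 * P3" for i
    proof -
      let ?E = "\<lambda>x. a k * (f x * x $ i * (\<sigma>1 (w k \<bullet> x) - 1)
      - (\<Sum>l<m. a l * (\<sigma> (w l \<bullet> x) * \<sigma>1 (w k \<bullet> x) - w l \<bullet> x) * x $ i))"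
      have bsE: "bs ?E"
        by (intro bs_diff bs_mult bs_f bs_cont continuous_intros)
      have "\<bar>integral\<^sup>L lborel (\<lambda>x. ?E x * \<rho> x)\<bar> \<le> q * ((B * R) * (CL * c^2 * q^2) + real m * ((q * (K6 * q^3)) * R))"
      proof (rule int_rho_bound)
        show "?E \<in> borel_measurable borel" using bsE unfolding bs_def by blast
        fix x assume rx: "\<rho> x \<noteq> 0"
        have t1: "\<bar>f x * x $ i * (\<sigma>1 (w k \<bullet> x) - 1)\<bar> \<le> (B * R) * (CL * c^2 * q^2)"
          by (intro abs_mult_le fb rx xi S3 c0 q0 uq k)
        have "\<bar>\<Sum>l<m. a l * (\<sigma> (w l \<bullet> x) * \<sigma>1 (w k \<bullet> x) - w l \<bullet> x) * x $ i\<bar>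
            \<le> (\<Sum>l<m. \<bar>a l * (\<sigma> (w l \<bullet> x) * \<sigma>1 (w k \<bullet> x) - w l \<bullet> x) * x $ i\<bar>)" by (rule sum_abs)
        also have "\<dots> \<le> of_nat (card {..<m}) * ((q * (K6 * q^3)) * R)"
        proof (rule sum_bounded_above)
          fix l assume "l \<in> {..<m}"
          then have l: "l < m" by simp
          show "\<bar>a l * (\<sigma> (w l \<bullet> x) * \<sigma>1 (w k \<bullet> x) - w l \<bullet> x) * x $ i\<bar> \<le> (q * (K6 * q^3)) * R"
            unfolding K6_def by (intro abs_mult_le aq l S6 c0 q0 q1' uq k rx xi)
        qed
        finally have t2: "\<bar>\<Sum>l<m. a l * (\<sigma> (w l \<bullet> x) * \<sigma>1 (w k \<bullet> x) - w l \<bullet> x) * x $ i\<bar>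
            \<le> real m * ((q * (K6 * q^3)) * R)" by simp
        show "\<bar>?E x\<bar> \<le> q * ((B * R) * (CL * c^2 * q^2) + real m * ((q * (K6 * q^3)) * R))"
          by (rule abs_mult_le[OF aq[OF k] abs_diff_le[OF t1 t2]])
      qed
      also have "q * ((B * R) * (CL * c^2 * q^2) + real m * ((q * (K6 * q^3)) * R))
          = (B * R * CL * c^2) * q^3 + (R * K6) * (real m * q^5)"
        by algebra
      also have "\<dots> \<le> C2 * P3" unfolding C2_def P3_def
        by (rule comb_le) (use B0 R0 CL_nonneg c0 K60 q0 in simp_all)
      finally show ?thesis unfolding hg_eq[OF k] .
    qed
    have "norm (hot_g \<sigma> \<rho> f j1 m a w k) \<le> (\<Sum>i\<in>UNIV. \<bar>hot_g \<sigma> \<rho> f j1 m a w k $ i\<bar>)"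
      by (rule norm_le_l1_cart)
    also have "\<dots> \<le> of_nat (card (UNIV :: 'n set)) * (C2 * P3)"
      by (rule sum_bounded_above) (rule gi)
    also have "\<dots> = (N * C2) * P3" unfolding N_def by simp
    also have "\<dots> \<le> C * P3" by (rule CP(2))
    finally have G: "norm (hot_g \<sigma> \<rho> f j1 m a w k) \<le> C * P3" .
    show "\<bar>hot_f \<sigma> \<rho> f j1 m a w k\<bar> \<le> C * (qmax m a w ^ 3 + real m * qmax m a w ^ 5)
                \<and> norm (hot_g \<sigma> \<rho> f j1 m a w k) \<le> C * (qmax m a w ^ 3 + real m * qmax m a w ^ 5)"
      using F G unfolding P3_def q_def by blast
  qed
qed

end
theorem lemma1:
  fixes \<rho> f :: "real^'n \<Rightarrow> real" and j1 :: 'n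
    and \<sigma> \<sigma>1 \<sigma>2 \<sigma>3 :: "real \<Rightarrow> real" and CL :: real
  assumes rho_meas: "\<rho> \<in> borel_measurable borel"
    and rho_nonneg: "\<And>x. \<rho> x \<ge> 0"
    and rho_int: "integrable lborel \<rho>"
    and rho_prob: "integral\<^sup>L lborel \<rho> = 1"
    and rho_cpt: "compact (closure {x. \<rho> x \<noteq> 0})"
    and rho_mom: "\<And>i j. integral\<^sup>L lborel (\<lambda>x. x $ i * x $ j * \<rho> x) = (if i = j then 1 else 0)"
    and f_meas: "f \<in> borel_measurable borel"
    and f_bdd: "\<exists>B. \<forall>x\<in>closure {x. \<rho> x \<noteq> 0}. \<bar>f x\<bar> \<le> B"
    and f_corr: "integral\<^sup>L lborel (\<lambda>x. (f x * \<rho> x) *\<^sub>R x) = axis j1 1"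
    and s1: "\<And>z. (\<sigma> has_real_derivative \<sigma>1 z) (at z)"
    and s2: "\<And>z. (\<sigma>1 has_real_derivative \<sigma>2 z) (at z)"
    and s3: "\<And>z. (\<sigma>2 has_real_derivative \<sigma>3 z) (at z)"
    and s0: "\<sigma> 0 = 0" "\<sigma>1 0 = 1" "\<sigma>2 0 = 0"
    and sL: "\<And>z. \<bar>\<sigma>3 z\<bar> \<le> CL"
  shows "\<exists>C>0. \<forall>m\<ge>1. \<forall>(a::nat \<Rightarrow> real) (w::nat \<Rightarrow> real^'n).
           qmax m a w \<le> 1 \<longrightarrow>
           (\<forall>k<m. \<bar>hot_f \<sigma> \<rho> f j1 m a w k\<bar> \<le> C * (qmax m a w ^ 3 + real m * qmax m a w ^ 5)
                \<and> norm (hot_g \<sigma> \<rho> f j1 m a w k) \<le> C * (qmax m a w ^ 3 + real m * qmax m a w ^ 5))"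
  proof -
  interpret full \<sigma> \<sigma>1 \<sigma>2 \<sigma>3 CL \<rho> f j1
    by unfold_locales (fact assms)+
  show ?thesis by (rule main)
qed

end
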